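(* Let $S^2\subset\mathbb{R}^3$ be the unit sphere with the round metric and area form, let $H:S^2\to\mathbb{R}$ be smooth and let $X_H$ be its Hamiltonian vector field. A point $s\in S^2$ is a conformal point of $X_H$ if and only if the second jet $j^2H(s)$ equals the second jet at $s$ of the restriction to $S^2$ of some affine function $d+ax+by+cz$ on $\mathbb{R}^3$ (a first spherical harmonic plus a constant).
   Context: A point $s$ is a conformal point of a vector field $X$ on the Riemannian surface $S^2$ if the linearization $\nabla X(s):T_sS^2\to T_sS^2$ (Levi-Civita covariant derivative) is an infinitesimal similarity, i.e. of the form $\lambda\,\mathrm{Id}+\mu J$ where $J$ is rotation by $90^\circ$; equivalently, the infinitesimal area-preserving map generated by $X$ has derivative at $s$ sending circles to congruent circles. *)

theory Defs
  imports "HOL-Analysis.Analysis"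
begin

text \<open>Extrinsic model of the round unit sphere S^2 = sphere 0 1 in R^3 (type real^3).\<close>

definition tangent_space :: "real^3 \<Rightarrow> (real^3) set" where
  "tangent_space s = {v. s \<bullet> v = 0}"

fun iter_dd :: "(real^3) list \<Rightarrow> (real^3 \<Rightarrow> 'b::real_normed_vector) \<Rightarrow> real^3 \<Rightarrow> 'b" where
  "iter_dd [] f = f"
| "iter_dd (v # vs) f = (\<lambda>x. frechet_derivative (iter_dd vs f) (at x) v)"

definition smooth_on :: "(real^3) set \<Rightarrow> (real^3 \<Rightarrow> real) \<Rightarrow> bool" where
  "smooth_on U f \<longleftrightarrow> open U \<and> (\<forall>vs. iter_dd vs f differentiable_on U)"

text \<open>Standard chart of S^2 centred at s: u (in the tangent plane near 0) maps to (s+u)/|s+u|.\<close>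
definition sphere_chart :: "real^3 \<Rightarrow> real^3 \<Rightarrow> real^3" where
  "sphere_chart s u = (1 / norm (s + u)) *\<^sub>R (s + u)"

text \<open>Equality of second jets at s of (the restrictions to S^2 of) H and G, computed in the chart.\<close>
definition jet2_eq :: "real^3 \<Rightarrow> (real^3 \<Rightarrow> real) \<Rightarrow> (real^3 \<Rightarrow> real) \<Rightarrow> bool" where
  "jet2_eq s H G \<longleftrightarrow>
     (let f = H \<circ> sphere_chart s; g = G \<circ> sphere_chart s in
        f 0 = g 0
      \<and> (\<forall>v\<in>tangent_space s. iter_dd [v] f 0 = iter_dd [v] g 0)
      \<and> (\<forall>v\<in>tangent_space s. \<forall>w\<in>tangent_space s. iter_dd [w, v] f 0 = iter_dd [w, v] g 0))"

text \<open>Hamiltonian vector field w.r.t. the area form omega_s(u,v) = s . (u x v):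
  the unique tangent X with omega_s(X, v) = dH_s(v) for all tangent v.\<close>
definition hamiltonian_vf :: "(real^3 \<Rightarrow> real) \<Rightarrow> real^3 \<Rightarrow> real^3" where
  "hamiltonian_vf H s = (THE X. X \<in> tangent_space s \<and>
      (\<forall>v\<in>tangent_space s. s \<bullet> cross3 X v = frechet_derivative H (at s) v))"

text \<open>Levi-Civita covariant derivative of a tangent vector field X on S^2 at s in direction v:
  tangential projection of the ambient derivative of X along the sphere (computed via the chart,
  whose differential at 0 is the identity on the tangent plane).\<close>
definition covariant_deriv :: "(real^3 \<Rightarrow> real^3) \<Rightarrow> real^3 \<Rightarrow> real^3 \<Rightarrow> real^3" where
  "covariant_deriv X s v =
     (let d = frechet_derivative (X \<circ> sphere_chart s) (at 0) v in d - (s \<bullet> d) *\<^sub>R s)"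

text \<open>Conformal point: nabla X(s) = lambda Id + mu J on T_s S^2, with J v = s x v (rotation by 90 degrees).\<close>
definition conformal_point :: "(real^3 \<Rightarrow> real^3) \<Rightarrow> real^3 \<Rightarrow> bool" where
  "conformal_point X s \<longleftrightarrow>
     (\<exists>l m::real. \<forall>v\<in>tangent_space s. covariant_deriv X s v = l *\<^sub>R v + m *\<^sub>R cross3 s v)"

end

theory Submission
  imports Defs
begin

lemma line_deriv:
  fixes H :: "real^3 \<Rightarrow> real"
  assumes "H differentiable at (a + r *\<^sub>R w)"
  shows "((\<lambda>r. H (a + r *\<^sub>R w)) has_real_derivative frechet_derivative H (at (a + r *\<^sub>R w)) w) (at r)"
proof -
  let ?D = "frechet_derivative H (at (a + r *\<^sub>R w))"
  have hd: "(H has_derivative ?D) (at (a + r *\<^sub>R w))"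
    using assms frechet_derivative_works by blast
  have ld: "((\<lambda>r. a + r *\<^sub>R w) has_derivative (\<lambda>r. r *\<^sub>R w)) (at r)"
    by (auto intro!: derivative_eq_intros)
  have "((\<lambda>r. H (a + r *\<^sub>R w)) has_derivative (\<lambda>r. ?D (r *\<^sub>R w))) (at r)"
    using has_derivative_compose[OF ld hd] by simp
  moreover have "(\<lambda>r. ?D (r *\<^sub>R w)) = (*) (?D w)"
    using has_derivative_bounded_linear[OF hd] by (auto simp: linear_simps(5) fun_eq_iff)
  ultimately show ?thesis
    by (simp add: has_field_derivative_def mult.commute)
qed

lemma schwarz_est:
  fixes H :: "real^3 \<Rightarrow> real"
  assumes U: "open U" "s \<in> U" and dH: "\<And>p. p \<in> U \<Longrightarrow> H differentiable at p"
    and dg: "(\<lambda>p. frechet_derivative H (at p) w) differentiable at s"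
    and e: "e > 0"
  shows "\<exists>d>0. \<forall>t. 0 < t \<and> t < d \<longrightarrow>
    \<bar>(H (s + t *\<^sub>R v + t *\<^sub>R w) - H (s + t *\<^sub>R v) - H (s + t *\<^sub>R w) + H s)
       - t^2 * frechet_derivative (\<lambda>p. frechet_derivative H (at p) w) (at s) v\<bar> \<le> e * t^2"
proof -
  define g where "g = (\<lambda>p. frechet_derivative H (at p) w)"
  define L where "L = frechet_derivative g (at s)"
  have gd: "(g has_derivative L) (at s)"
    using dg frechet_derivative_works unfolding g_def L_def by blast
  have bl: "bounded_linear L" using has_derivative_bounded_linear[OF gd] .
  define M where "M = norm v + norm w + 1"
  have M: "M > 0" unfolding M_def by (simp add: add_nonneg_pos)
  have e': "e / (2*M) > 0" using e M by simp
  obtain d1 where d1: "d1 > 0" and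
    d1h: "\<And>y. norm (y - s) < d1 \<Longrightarrow> \<bar>g y - g s - L (y - s)\<bar> \<le> e / (2*M) * norm (y - s)"
    using gd e' unfolding has_derivative_at_alt by (metis real_norm_def)
  obtain d2 where d2: "d2 > 0" and d2b: "ball s d2 \<subseteq> U"
    using U open_contains_ball by blast
  define d where "d = min d1 d2 / M"
  have d: "d > 0" unfolding d_def using d1 d2 M by simp
  show ?thesis
  proof (intro exI[of _ d] conjI allI impI)
    show "d > 0" by (rule d)
    fix t :: real assume t: "0 < t \<and> t < d"
    have tM: "t * M < min d1 d2" using t M unfolding d_def by (simp add: pos_less_divide_eq)
    have close: "norm (s + a *\<^sub>R v + r *\<^sub>R w - s) < min d1 d2"
      if "0 \<le> a" "a \<le> t" "0 \<le> r" "r \<le> t" for a r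
    proof -
      have "norm (s + a *\<^sub>R v + r *\<^sub>R w - s) \<le> a * norm v + r * norm w"
        using that norm_triangle_ineq[of "a *\<^sub>R v" "r *\<^sub>R w"] by simp
      also have "\<dots> \<le> t * norm v + t * norm w"
        using that by (intro add_mono mult_right_mono) auto
      also have "\<dots> < t * M" using t unfolding M_def by (simp add: algebra_simps)
      finally show ?thesis using tM by simp
    qed
    have inU: "s + a *\<^sub>R v + r *\<^sub>R w \<in> U"
      if "0 \<le> a" "a \<le> t" "0 \<le> r" "r \<le> t" for a r
    proof -
      have "s + a *\<^sub>R v + r *\<^sub>R w \<in> ball s d2"
        using close[OF that] by (metis dist_norm dist_commute mem_ball min_less_iff_conj)
      then show ?thesis using d2b by blast
    qed
    define \<phi> where "\<phi> = (\<lambda>r. H (s + t *\<^sub>R v + r *\<^sub>R w) - H (s + r *\<^sub>R w))"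
    have der: "(\<phi> has_real_derivative (g (s + t *\<^sub>R v + r *\<^sub>R w) - g (s + r *\<^sub>R w))) (at r)"
      if "0 \<le> r" "r \<le> t" for r
    proof -
      have i1: "s + t *\<^sub>R v + r *\<^sub>R w \<in> U" using inU[of t r] that t by auto
      have i2: "s + r *\<^sub>R w \<in> U" using inU[of 0 r] that t by auto
      show ?thesis unfolding \<phi>_def g_def
        by (intro DERIV_diff line_deriv dH i1 i2)
    qed
    obtain \<xi> where \<xi>: "0 < \<xi>" "\<xi> < t"
      and mv: "\<phi> t - \<phi> 0 = (t - 0) * (g (s + t *\<^sub>R v + \<xi> *\<^sub>R w) - g (s + \<xi> *\<^sub>R w))"
      using MVT2[of 0 t \<phi> "\<lambda>r. g (s + t *\<^sub>R v + r *\<^sub>R w) - g (s + r *\<^sub>R w)"] der t by auto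
    define p1 where "p1 = s + t *\<^sub>R v + \<xi> *\<^sub>R w"
    define p2 where "p2 = s + \<xi> *\<^sub>R w"
    have n1: "norm (p1 - s) < d1" using close[of t \<xi>] \<xi> t unfolding p1_def by simp
    have n2: "norm (p2 - s) < d1" using close[of 0 \<xi>] \<xi> t unfolding p2_def by simp
    have n1': "norm (p1 - s) \<le> t * M"
    proof -
      have "norm (p1 - s) \<le> t * norm v + \<xi> * norm w"
        using norm_triangle_ineq[of "t *\<^sub>R v" "\<xi> *\<^sub>R w"] \<xi> t unfolding p1_def by simp
      also have "\<dots> \<le> t * M" using \<xi> t unfolding M_def
        by (smt (verit, best) mult_right_mono norm_ge_zero distrib_left mult.commute)
      finally show ?thesis .
    qed
    have n2': "norm (p2 - s) \<le> t * M"
    proof -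
      have "norm (p2 - s) = \<xi> * norm w" using \<xi> unfolding p2_def by simp
      also have "\<dots> \<le> t * M" using \<xi> t unfolding M_def
        by (smt (verit, best) mult_right_mono norm_ge_zero distrib_left mult.commute)
      finally show ?thesis .
    qed
    have Ld: "L (p1 - s) - L (p2 - s) = t * L v"
    proof -
      have "L (p1 - s) - L (p2 - s) = L (p1 - p2)" using bl by (simp add: linear_diff bounded_linear.linear)
      also have "p1 - p2 = t *\<^sub>R v" unfolding p1_def p2_def by simp
      finally show ?thesis using bl by (simp add: linear_simps(5))
    qed
    have est: "\<bar>(g p1 - g p2) - t * L v\<bar> \<le> e * t"
    proof -
      have "\<bar>(g p1 - g p2) - t * L v\<bar> = \<bar>(g p1 - g s - L (p1 - s)) - (g p2 - g s - L (p2 - s))\<bar>"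
        using Ld by (simp add: algebra_simps)
      also have "\<dots> \<le> \<bar>g p1 - g s - L (p1 - s)\<bar> + \<bar>g p2 - g s - L (p2 - s)\<bar>" by simp
      also have "\<dots> \<le> e / (2*M) * norm (p1 - s) + e / (2*M) * norm (p2 - s)"
        using d1h[OF n1] d1h[OF n2] by simp
      also have "\<dots> \<le> e / (2*M) * (t * M) + e / (2*M) * (t * M)"
        using e' n1' n2' by (intro add_mono mult_left_mono) auto
      also have "\<dots> = e * t" using M by (simp add: field_simps)
      finally show ?thesis .
    qed
    have "H (s + t *\<^sub>R v + t *\<^sub>R w) - H (s + t *\<^sub>R v) - H (s + t *\<^sub>R w) + H s = \<phi> t - \<phi> 0"
      unfolding \<phi>_def by simp
    also have "\<dots> = t * (g p1 - g p2)" using mv unfolding p1_def p2_def by simp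
    finally have eq: "H (s + t *\<^sub>R v + t *\<^sub>R w) - H (s + t *\<^sub>R v) - H (s + t *\<^sub>R w) + H s = t * (g p1 - g p2)" .
    have "\<bar>t * (g p1 - g p2) - t^2 * L v\<bar> = t * \<bar>(g p1 - g p2) - t * L v\<bar>"
      using t by (simp add: power2_eq_square abs_mult right_diff_distrib[symmetric] mult.assoc)
    also have "\<dots> \<le> t * (e * t)" using est t by (intro mult_left_mono) auto
    finally show "\<bar>(H (s + t *\<^sub>R v + t *\<^sub>R w) - H (s + t *\<^sub>R v) - H (s + t *\<^sub>R w) + H s)
       - t^2 * frechet_derivative (\<lambda>p. frechet_derivative H (at p) w) (at s) v\<bar> \<le> e * t^2"
      unfolding eq L_def[symmetric] g_def[symmetric] by (simp add: power2_eq_square mult.commute mult.left_commute)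
  qed
qed

lemma schwarz:
  fixes H :: "real^3 \<Rightarrow> real"
  assumes U: "open U" "s \<in> U" and dH: "\<And>p. p \<in> U \<Longrightarrow> H differentiable at p"
    and dw: "(\<lambda>p. frechet_derivative H (at p) w) differentiable at s"
    and dv: "(\<lambda>p. frechet_derivative H (at p) v) differentiable at s"
  shows "frechet_derivative (\<lambda>p. frechet_derivative H (at p) w) (at s) v
       = frechet_derivative (\<lambda>p. frechet_derivative H (at p) v) (at s) w"
proof (rule ccontr)
  define A where "A = frechet_derivative (\<lambda>p. frechet_derivative H (at p) w) (at s) v"
  define B where "B = frechet_derivative (\<lambda>p. frechet_derivative H (at p) v) (at s) w"
  assume "\<not> ?thesis"
  then have ne: "A \<noteq> B" unfolding A_def B_def .
  define e where "e = \<bar>A - B\<bar> / 4"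
  have e: "e > 0" using ne unfolding e_def by simp
  obtain d1 where d1: "d1 > 0" and h1: "\<And>t. 0 < t \<and> t < d1 \<Longrightarrow>
    \<bar>(H (s + t *\<^sub>R v + t *\<^sub>R w) - H (s + t *\<^sub>R v) - H (s + t *\<^sub>R w) + H s) - t^2 * A\<bar> \<le> e * t^2"
    using schwarz_est[OF U dH dw e, of v] unfolding A_def by blast
  obtain d2 where d2: "d2 > 0" and h2: "\<And>t. 0 < t \<and> t < d2 \<Longrightarrow>
    \<bar>(H (s + t *\<^sub>R w + t *\<^sub>R v) - H (s + t *\<^sub>R w) - H (s + t *\<^sub>R v) + H s) - t^2 * B\<bar> \<le> e * t^2"
    using schwarz_est[OF U dH dv e, of w] unfolding B_def by blast
  define t where "t = min d1 d2 / 2"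
  have t: "0 < t" "t < d1" "t < d2" using d1 d2 unfolding t_def by auto
  have sw: "s + t *\<^sub>R w + t *\<^sub>R v = s + t *\<^sub>R v + t *\<^sub>R w" by (simp add: algebra_simps)
  have "\<bar>t^2 * A - t^2 * B\<bar> \<le> 2 * e * t^2"
    using h1[of t] h2[of t] t unfolding sw by linarith
  then have "t^2 * \<bar>A - B\<bar> \<le> t^2 * (2 * e)"
  proof -
    have "\<bar>t^2 * A - t^2 * B\<bar> = t^2 * \<bar>A - B\<bar>"
      by (simp add: right_diff_distrib[symmetric] abs_mult)
    then show ?thesis using \<open>\<bar>t^2 * A - t^2 * B\<bar> \<le> 2 * e * t^2\<close> by (simp add: mult_ac)
  qed
  then have "\<bar>A - B\<bar> \<le> 2 * e" using t by simp
  then show False using e unfolding e_def by (simp add: field_simps)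
qed

lemma V1: "cross3 a (cross3 b c) = (a \<bullet> c) *\<^sub>R b - (a \<bullet> b) *\<^sub>R c"
  by (simp add: cross3_simps forall_3)

lemma V2: "a \<bullet> cross3 b c = b \<bullet> cross3 c a"
  by (simp add: cross3_simps)

lemma V3: "cross3 a b \<bullet> cross3 a b = (a \<bullet> a) * (b \<bullet> b) - (a \<bullet> b)^2"
  by (simp add: cross3_simps power2_eq_square)

lemma dot_cross0: "s \<bullet> cross3 a s = 0" "s \<bullet> cross3 s a = 0" "a \<bullet> cross3 s a = 0"
  by (simp_all add: cross3_simps)

lemma perp_all_tangent:
  fixes s y :: "real^3"
  assumes ss: "s \<bullet> s = 1" and h: "\<And>w. s \<bullet> w = 0 \<Longrightarrow> y \<bullet> w = 0"
  shows "y = (s \<bullet> y) *\<^sub>R s"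
proof -
  define z where "z = y - (s \<bullet> y) *\<^sub>R s"
  have sz: "s \<bullet> z = 0" unfolding z_def using ss by (simp add: inner_diff_right)
  have "z \<bullet> z = y \<bullet> z - (s \<bullet> y) * (s \<bullet> z)" unfolding z_def
    by (simp add: inner_diff_left inner_commute)
  then have "z \<bullet> z = 0" using h[OF sz] sz by simp
  then have "z = 0" by simp
  then show ?thesis unfolding z_def by simp
qed

lemma P_Gv:
  fixes s v G :: "real^3"
  assumes ss: "s \<bullet> s = 1" and sv: "s \<bullet> v = 0"
  shows "cross3 G v - (s \<bullet> cross3 G v) *\<^sub>R s = (G \<bullet> s) *\<^sub>R cross3 s v"
proof -
  define y where "y = cross3 G v - (G \<bullet> s) *\<^sub>R cross3 s v"
  have "cross3 s y = cross3 s (cross3 G v) - (G \<bullet> s) *\<^sub>R cross3 s (cross3 s v)"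
    unfolding y_def by (simp add: Cross3.right_diff_distrib cross_mult_right)
  also have "\<dots> = 0" using ss sv by (simp add: V1 inner_commute)
  finally have "cross3 s y = 0" .
  then have "cross3 s (cross3 s y) = 0" by simp
  then have y: "y = (s \<bullet> y) *\<^sub>R s" using ss by (simp add: V1)
  have sy: "s \<bullet> y = s \<bullet> cross3 G v" unfolding y_def by (simp add: inner_diff_right dot_cross0)
  have "cross3 G v = y + (G \<bullet> s) *\<^sub>R cross3 s v" unfolding y_def by simp
  then show ?thesis using y sy by (metis add_diff_cancel_left' diff_add_eq)
qed

lemma exists_tangent:
  fixes s :: "real^3"
  assumes "s \<noteq> 0"
  shows "\<exists>v. s \<bullet> v = 0 \<and> v \<noteq> 0"
proof (rule ccontr)
  assume "\<not> ?thesis"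
  then have "cross3 s (axis 1 1) = 0" "cross3 s (axis 3 1) = 0"
    using dot_cross0(2) by blast+
  then have "s = 0" by (simp add: cross3_simps axis_def forall_3)
  then show False using assms by simp
qed

lemma alg_conf:
  fixes s G :: "real^3" and h :: "real^3 \<Rightarrow> real^3"
  assumes ss: "s \<bullet> s = 1" and hs: "\<And>v w. h v \<bullet> w = h w \<bullet> v"
  shows "(\<exists>l m. \<forall>v. s \<bullet> v = 0 \<longrightarrow>
            (cross3 (h v) s + cross3 G v) - (s \<bullet> (cross3 (h v) s + cross3 G v)) *\<^sub>R s
              = l *\<^sub>R v + m *\<^sub>R cross3 s v)
      \<longleftrightarrow> (\<exists>k. \<forall>v w. s \<bullet> v = 0 \<longrightarrow> s \<bullet> w = 0 \<longrightarrow> h v \<bullet> w = k * (v \<bullet> w))"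
proof -
  have cov: "(cross3 (h v) s + cross3 G v) - (s \<bullet> (cross3 (h v) s + cross3 G v)) *\<^sub>R s
     = cross3 (h v) s + (G \<bullet> s) *\<^sub>R cross3 s v" if "s \<bullet> v = 0" for v
    using P_Gv[OF ss that, of G] by (simp add: inner_add_right dot_cross0 algebra_simps)
  show ?thesis
  proof
    assume "\<exists>l m. \<forall>v. s \<bullet> v = 0 \<longrightarrow>
            (cross3 (h v) s + cross3 G v) - (s \<bullet> (cross3 (h v) s + cross3 G v)) *\<^sub>R s
              = l *\<^sub>R v + m *\<^sub>R cross3 s v"
    then obtain l m where lm0: "\<And>v. s \<bullet> v = 0 \<Longrightarrow>
            (cross3 (h v) s + cross3 G v) - (s \<bullet> (cross3 (h v) s + cross3 G v)) *\<^sub>R s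
              = l *\<^sub>R v + m *\<^sub>R cross3 s v" by blast
    have lm: "cross3 (h v) s = l *\<^sub>R v + (m - G \<bullet> s) *\<^sub>R cross3 s v" if "s \<bullet> v = 0" for v
    proof -
      have "cross3 (h v) s + (G \<bullet> s) *\<^sub>R cross3 s v = l *\<^sub>R v + m *\<^sub>R cross3 s v"
        using lm0[OF that] cov[OF that] by metis
      then have "cross3 (h v) s = l *\<^sub>R v + m *\<^sub>R cross3 s v - (G \<bullet> s) *\<^sub>R cross3 s v"
        by (metis add_diff_cancel_right')
      then show ?thesis by (simp add: scaleR_diff_left)
    qed
    define \<mu> where "\<mu> = m - G \<bullet> s"
    have key: "h v \<bullet> w = l * (cross3 s v \<bullet> w) - \<mu> * (v \<bullet> w)" if "s \<bullet> v = 0" "s \<bullet> w = 0" for v w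
    proof -
      have "cross3 s (cross3 (h v) s) = cross3 s (l *\<^sub>R v + \<mu> *\<^sub>R cross3 s v)"
        using lm[OF that(1)] unfolding \<mu>_def by simp
      then have "h v - (s \<bullet> h v) *\<^sub>R s = l *\<^sub>R cross3 s v - \<mu> *\<^sub>R v"
        using ss that(1) by (simp add: V1 cross_add_right cross_mult_right inner_commute)
      then have "(h v - (s \<bullet> h v) *\<^sub>R s) \<bullet> w = (l *\<^sub>R cross3 s v - \<mu> *\<^sub>R v) \<bullet> w" by simp
      then show ?thesis using that(2) by (simp add: inner_diff_left inner_diff_right inner_commute)
    qed
    obtain v0 where v0: "s \<bullet> v0 = 0" "v0 \<noteq> 0" using exists_tangent[of s] ss by force
    define w0 where "w0 = cross3 s v0"
    have w0: "s \<bullet> w0 = 0" unfolding w0_def by (simp add: dot_cross0)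
    have vw: "v0 \<bullet> w0 = 0" unfolding w0_def by (simp add: dot_cross0)
    have ww: "w0 \<bullet> w0 = v0 \<bullet> v0" unfolding w0_def using V3[of s v0] ss v0 by simp
    have e1: "h v0 \<bullet> w0 = l * (v0 \<bullet> v0)" using key[OF v0(1) w0] vw ww unfolding w0_def by simp
    have "cross3 s w0 = - v0" unfolding w0_def using ss v0 by (simp add: V1)
    then have e2: "h w0 \<bullet> v0 = - l * (v0 \<bullet> v0)" using key[OF w0 v0(1)] vw by (simp add: inner_commute)
    have "l * (v0 \<bullet> v0) = - l * (v0 \<bullet> v0)" using e1 e2 hs[of v0 w0] by simp
    then have "l = 0" using v0(2) by simp
    then show "\<exists>k. \<forall>v w. s \<bullet> v = 0 \<longrightarrow> s \<bullet> w = 0 \<longrightarrow> h v \<bullet> w = k * (v \<bullet> w)"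
      using key by (intro exI[of _ "- \<mu>"]) auto
  next
    assume "\<exists>k. \<forall>v w. s \<bullet> v = 0 \<longrightarrow> s \<bullet> w = 0 \<longrightarrow> h v \<bullet> w = k * (v \<bullet> w)"
    then obtain k where k: "\<And>v w. s \<bullet> v = 0 \<Longrightarrow> s \<bullet> w = 0 \<Longrightarrow> h v \<bullet> w = k * (v \<bullet> w)" by blast
    have hv: "cross3 (h v) s = (- k) *\<^sub>R cross3 s v" if "s \<bullet> v = 0" for v
    proof -
      define y where "y = h v - k *\<^sub>R v"
      have "y = (s \<bullet> y) *\<^sub>R s"
        by (rule perp_all_tangent[OF ss]) (simp add: y_def inner_diff_left k[OF that])
      then have "h v = k *\<^sub>R v + (s \<bullet> y) *\<^sub>R s" unfolding y_def by (metis diff_add_cancel add.commute)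
      then show ?thesis by (simp add: cross_add_left cross_mult_left cross_skew[of v s])
    qed
    show "\<exists>l m. \<forall>v. s \<bullet> v = 0 \<longrightarrow>
            (cross3 (h v) s + cross3 G v) - (s \<bullet> (cross3 (h v) s + cross3 G v)) *\<^sub>R s
              = l *\<^sub>R v + m *\<^sub>R cross3 s v"
    proof (rule exI[of _ 0], rule exI[of _ "G \<bullet> s - k"], intro allI impI)
      fix v assume sv: "s \<bullet> v = 0"
      have "(cross3 (h v) s + cross3 G v) - (s \<bullet> (cross3 (h v) s + cross3 G v)) *\<^sub>R s
          = cross3 (h v) s + (G \<bullet> s) *\<^sub>R cross3 s v" by (rule cov[OF sv])
      also have "\<dots> = (- k) *\<^sub>R cross3 s v + (G \<bullet> s) *\<^sub>R cross3 s v" using hv[OF sv] by simp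
      also have "\<dots> = 0 *\<^sub>R v + (G \<bullet> s - k) *\<^sub>R cross3 s v" by (simp add: algebra_simps)
      finally show "(cross3 (h v) s + cross3 G v) - (s \<bullet> (cross3 (h v) s + cross3 G v)) *\<^sub>R s
          = 0 *\<^sub>R v + (G \<bullet> s - k) *\<^sub>R cross3 s v" .
    qed
  qed
qed

definition Dc :: "real^3 \<Rightarrow> real^3 \<Rightarrow> real^3 \<Rightarrow> real^3" where
  "Dc s x v = inverse (norm (s + x)) *\<^sub>R v - (((s + x) \<bullet> v) * inverse (norm (s + x)) ^ 3) *\<^sub>R (s + x)"

lemma chart_deriv:
  assumes nz: "s + x \<noteq> 0"
  shows "(sphere_chart s has_derivative Dc s x) (at x)"
proof -
  have a: "((\<lambda>x. s + x) has_derivative (\<lambda>v. v)) (at x)"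
    by (auto intro!: derivative_eq_intros)
  have n: "((\<lambda>x. norm (s + x)) has_derivative (\<lambda>v. v \<bullet> sgn (s + x))) (at x)"
    using has_derivative_compose[OF a has_derivative_norm[OF nz]] by simp
  have np: "norm (s + x) \<noteq> 0" using nz by simp
  have i: "((\<lambda>x. inverse (norm (s + x))) has_derivative
     (\<lambda>v. - (inverse (norm (s + x)) * (v \<bullet> sgn (s + x)) * inverse (norm (s + x))))) (at x)"
    using Deriv.has_derivative_inverse[OF np n] by simp
  have "((\<lambda>x. inverse (norm (s + x)) *\<^sub>R (s + x)) has_derivative
     (\<lambda>v. inverse (norm (s + x)) *\<^sub>R v + (- (inverse (norm (s + x)) * (v \<bullet> sgn (s + x)) * inverse (norm (s + x)))) *\<^sub>R (s + x))) (at x)"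
    using has_derivative_scaleR[OF i a] by simp
  moreover have "(\<lambda>v. inverse (norm (s + x)) *\<^sub>R v + (- (inverse (norm (s + x)) * (v \<bullet> sgn (s + x)) * inverse (norm (s + x)))) *\<^sub>R (s + x)) = Dc s x"
  proof
    fix v
    define y where "y = s + x"
    define n where "n = norm y"
    have sg: "v \<bullet> sgn y = (y \<bullet> v) / n" unfolding n_def
      by (simp add: sgn_div_norm inner_commute divide_inverse mult.commute)
    have sc: "inverse n * ((y \<bullet> v) / n) * inverse n = (y \<bullet> v) * inverse n ^ 3"
      by (simp add: power3_eq_cube divide_inverse mult_ac)
    show "inverse (norm (s + x)) *\<^sub>R v + (- (inverse (norm (s + x)) * (v \<bullet> sgn (s + x)) * inverse (norm (s + x)))) *\<^sub>R (s + x) = Dc s x v"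
      unfolding Dc_def y_def[symmetric] n_def[symmetric] sg sc by (simp add: divide_inverse)
  qed
  ultimately show ?thesis unfolding sphere_chart_def[abs_def] by (simp add: divide_inverse)
qed

lemma norm_shift_deriv:
  assumes nz: "s + x \<noteq> 0"
  shows "((\<lambda>x. norm (s + x)) has_derivative (\<lambda>v. v \<bullet> sgn (s + x))) (at x)"
proof -
  have a: "((\<lambda>x. s + x) has_derivative (\<lambda>v. v)) (at x)"
    by (auto intro!: derivative_eq_intros)
  show ?thesis
    using has_derivative_compose[OF a has_derivative_norm[OF nz]] by simp
qed

schematic_goal dq: "norm s = 1 \<Longrightarrow> ((\<lambda>x. Dc s x v) has_derivative ?Q) (at 0)"
  unfolding Dc_def
  apply (rule derivative_eq_intros norm_shift_deriv refl | (simp; fail) | (metis add.right_neutral norm_zero zero_neq_one))+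
  done

lemma dq_props:
  assumes s1: "norm s = 1" and sv: "s \<bullet> v = 0"
  shows "\<exists>Q. ((\<lambda>x. Dc s x v) has_derivative Q) (at 0) \<and> (\<forall>w. s \<bullet> w = 0 \<longrightarrow> Q w = - (w \<bullet> v) *\<^sub>R s)"
proof -
  have sg: "sgn s = s" using s1 by (simp add: sgn_div_norm)
  show ?thesis
    apply (rule exI, rule conjI, rule dq[OF s1])
    using s1 sv sg by (auto simp: inner_commute)
qed

lemma Dc0: "norm s = 1 \<Longrightarrow> s \<bullet> v = 0 \<Longrightarrow> Dc s 0 v = v"
  by (simp add: Dc_def)

lemma lin_expand:
  fixes L :: "real^3 \<Rightarrow> real"
  assumes "linear L"
  shows "L u = (\<Sum>i\<in>UNIV. u$i * L (axis i 1))"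
proof -
  have "L u = L (\<Sum>i\<in>UNIV. u$i *\<^sub>R axis i 1)" using basis_expansion[of u] by (simp add: scalar_mult_eq_scaleR)
  also have "\<dots> = (\<Sum>i\<in>UNIV. u$i * L (axis i 1))" using assms by (simp add: linear_sum linear_cmul)
  finally show ?thesis .
qed

definition gradv :: "(real^3 \<Rightarrow> real) \<Rightarrow> real^3 \<Rightarrow> real^3" where
  "gradv H p = (\<Sum>i\<in>UNIV. frechet_derivative H (at p) (axis i 1) *\<^sub>R axis i 1)"

definition hessv :: "(real^3 \<Rightarrow> real) \<Rightarrow> real^3 \<Rightarrow> real^3 \<Rightarrow> real^3" where
  "hessv H p v = (\<Sum>i\<in>UNIV. frechet_derivative (\<lambda>x. frechet_derivative H (at x) (axis i 1)) (at p) v *\<^sub>R axis i 1)"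

lemma sum_axis_inner: "(\<Sum>i\<in>UNIV. f i *\<^sub>R axis i 1) \<bullet> (u::real^3) = (\<Sum>i\<in>UNIV. u$i * f i)"
  by (simp add: inner_sum_left inner_axis' mult.commute)

context
  fixes H :: "real^3 \<Rightarrow> real" and U :: "(real^3) set" and s :: "real^3"
  assumes oU: "open U" and sU: "sphere 0 1 \<subseteq> U" and s1: "norm s = 1"
    and dH: "\<And>p. p \<in> U \<Longrightarrow> H differentiable at p"
    and dE: "\<And>p i. p \<in> U \<Longrightarrow> (\<lambda>x. frechet_derivative H (at x) (axis i 1)) differentiable at p"
begin

lemma sU': "s \<in> U" using s1 sU by auto

lemma DH_lin: "p \<in> U \<Longrightarrow> linear (frechet_derivative H (at p))"
  using dH frechet_derivative_works has_derivative_bounded_linear bounded_linear.linear by blast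

lemma DH_expand: "p \<in> U \<Longrightarrow> frechet_derivative H (at p) u = (\<Sum>i\<in>UNIV. u$i * frechet_derivative H (at p) (axis i 1))"
  using lin_expand[OF DH_lin] .

lemma DH_grad: "p \<in> U \<Longrightarrow> frechet_derivative H (at p) u = gradv H p \<bullet> u"
  unfolding gradv_def sum_axis_inner using DH_expand .

lemma nz: "norm x < 1 \<Longrightarrow> s + x \<noteq> 0"
proof
  assume a: "norm x < 1" "s + x = 0"
  then have "x = -s" by (simp add: add_eq_0_iff2)
  then show False using a s1 by simp
qed

lemma c_norm: "norm x < 1 \<Longrightarrow> norm (sphere_chart s x) = 1"
  using nz by (simp add: sphere_chart_def)

lemma c_in: "norm x < 1 \<Longrightarrow> sphere_chart s x \<in> U"
  using c_norm sU by auto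

lemma c0: "sphere_chart s 0 = s" using s1 by (simp add: sphere_chart_def)

lemma f_deriv: "norm x < 1 \<Longrightarrow> ((H \<circ> sphere_chart s) has_derivative (\<lambda>u. frechet_derivative H (at (sphere_chart s x)) (Dc s x u))) (at x)"
  using diff_chain_at[OF chart_deriv[OF nz] frechet_derivative_works[THEN iffD1, OF dH[OF c_in]]]
  by (simp add: o_def)

lemma J0: "(H \<circ> sphere_chart s) 0 = H s" by (simp add: c0)

lemma J1: "s \<bullet> v = 0 \<Longrightarrow> iter_dd [v] (H \<circ> sphere_chart s) 0 = frechet_derivative H (at s) v"
proof -
  assume sv: "s \<bullet> v = 0"
  have "frechet_derivative (H \<circ> sphere_chart s) (at 0) = (\<lambda>u. frechet_derivative H (at (sphere_chart s 0)) (Dc s 0 u))"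
    by (rule frechet_derivative_at[symmetric]) (rule f_deriv, simp)
  then show ?thesis using sv s1 by (simp add: c0 Dc0)
qed

lemma J2:
  assumes sv: "s \<bullet> v = 0" and sw: "s \<bullet> w = 0"
  shows "iter_dd [w, v] (H \<circ> sphere_chart s) 0
     = (\<Sum>i\<in>UNIV. v$i * frechet_derivative (\<lambda>x. frechet_derivative H (at x) (axis i 1)) (at s) w)
       - (w \<bullet> v) * frechet_derivative H (at s) s"
proof -
  let ?E = "\<lambda>i. (\<lambda>x. frechet_derivative H (at x) (axis i 1))"
  obtain Q where Q: "((\<lambda>x. Dc s x v) has_derivative Q) (at 0)" "\<And>w. s \<bullet> w = 0 \<Longrightarrow> Q w = - (w \<bullet> v) *\<^sub>R s"
    using dq_props[OF s1 sv] by blast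
  define g where "g x = (\<Sum>i\<in>UNIV. (Dc s x v)$i * ?E i (sphere_chart s x))" for x
  have cd: "(sphere_chart s has_derivative Dc s 0) (at 0)" using chart_deriv[OF nz] by simp
  have Ed: "((\<lambda>x. ?E i (sphere_chart s x)) has_derivative (\<lambda>h. frechet_derivative (?E i) (at s) (Dc s 0 h))) (at 0)" for i
  proof -
    have "(?E i has_derivative frechet_derivative (?E i) (at s)) (at (sphere_chart s 0))"
      using dE[OF sU'] frechet_derivative_works c0 by metis
    from diff_chain_at[OF cd this] show ?thesis by (simp add: o_def)
  qed
  define g' where "g' h = (\<Sum>i\<in>UNIV. (Dc s 0 v)$i * frechet_derivative (?E i) (at s) (Dc s 0 h) + (Q h)$i * ?E i (sphere_chart s 0))" for h
  have md: "((\<lambda>x. (Dc s x v)$i * ?E i (sphere_chart s x)) has_derivative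
     (\<lambda>h. (Dc s 0 v)$i * frechet_derivative (?E i) (at s) (Dc s 0 h) + (Q h)$i * ?E i (sphere_chart s 0))) (at 0)" for i
    using has_derivative_mult[OF bounded_linear.has_derivative[OF bounded_linear_vec_nth Q(1)] Ed[of i]] .
  have gd: "(g has_derivative g') (at 0)"
    unfolding g_def g'_def by (rule has_derivative_sum[OF md])
  have eq: "g x = frechet_derivative (H \<circ> sphere_chart s) (at x) v" if "x \<in> ball 0 1" for x
  proof -
    have nx: "norm x < 1" using that by simp
    have "frechet_derivative (H \<circ> sphere_chart s) (at x) v = frechet_derivative H (at (sphere_chart s x)) (Dc s x v)"
      using frechet_derivative_at[OF f_deriv[OF nx], symmetric] by simp
    also have "\<dots> = g x" unfolding g_def by (rule DH_expand[OF c_in[OF nx]])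
    finally show ?thesis by simp
  qed
  have "((\<lambda>x. frechet_derivative (H \<circ> sphere_chart s) (at x) v) has_derivative g') (at 0)"
    by (rule has_derivative_transform_within_open[OF gd open_ball[of 0 1]]) (use eq in auto)
  then have "iter_dd [w, v] (H \<circ> sphere_chart s) 0 = g' w"
    using frechet_derivative_at by fastforce
  also have "\<dots> = (\<Sum>i\<in>UNIV. v$i * frechet_derivative (?E i) (at s) w + (- (w \<bullet> v) * s$i) * ?E i s)"
    unfolding g'_def using Q(2)[OF sw] Dc0[OF s1 sv] Dc0[OF s1 sw] c0 by simp
  also have "\<dots> = (\<Sum>i\<in>UNIV. v$i * frechet_derivative (?E i) (at s) w) - (w \<bullet> v) * (\<Sum>i\<in>UNIV. s$i * ?E i s)"
    by (simp add: sum_3 algebra_simps)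
  also have "(\<Sum>i\<in>UNIV. s$i * ?E i s) = frechet_derivative H (at s) s"
    by (rule DH_expand[OF sU', symmetric])
  finally show ?thesis .
qed

lemma HV:
  assumes p: "p \<in> sphere 0 1"
  shows "hamiltonian_vf H p = cross3 (gradv H p) p"
  unfolding hamiltonian_vf_def
proof (rule the_equality)
  have pU: "p \<in> U" using p sU by auto
  have pp: "p \<bullet> p = 1" using p by (simp add: norm_eq_1)
  let ?g = "gradv H p"
  show "cross3 ?g p \<in> tangent_space p \<and>
    (\<forall>v\<in>tangent_space p. p \<bullet> cross3 (cross3 ?g p) v = frechet_derivative H (at p) v)"
  proof (intro conjI ballI)
    show "cross3 ?g p \<in> tangent_space p" unfolding tangent_space_def by (simp add: dot_cross0)
    fix v assume "v \<in> tangent_space p"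
    then have pv: "p \<bullet> v = 0" unfolding tangent_space_def by simp
    have "cross3 (cross3 ?g p) v = - cross3 v (cross3 ?g p)" by (rule cross_skew)
    also have "\<dots> = (v \<bullet> ?g) *\<^sub>R p" using pv by (simp add: V1 inner_commute)
    finally have "p \<bullet> cross3 (cross3 ?g p) v = v \<bullet> ?g" using pp by simp
    also have "\<dots> = frechet_derivative H (at p) v" using DH_grad[OF pU] by (simp add: inner_commute)
    finally show "p \<bullet> cross3 (cross3 ?g p) v = frechet_derivative H (at p) v" .
  qed
  fix X assume X: "X \<in> tangent_space p \<and>
    (\<forall>v\<in>tangent_space p. p \<bullet> cross3 X v = frechet_derivative H (at p) v)"
  have X0: "\<forall>v\<in>tangent_space p. p \<bullet> cross3 (cross3 ?g p) v = frechet_derivative H (at p) v"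
  proof
    fix v assume "v \<in> tangent_space p"
    then have pv: "p \<bullet> v = 0" unfolding tangent_space_def by simp
    have "cross3 (cross3 ?g p) v = - cross3 v (cross3 ?g p)" by (rule cross_skew)
    also have "\<dots> = (v \<bullet> ?g) *\<^sub>R p" using pv by (simp add: V1 inner_commute)
    finally have "p \<bullet> cross3 (cross3 ?g p) v = v \<bullet> ?g" using pp by simp
    also have "\<dots> = frechet_derivative H (at p) v" using DH_grad[OF pU] by (simp add: inner_commute)
    finally show "p \<bullet> cross3 (cross3 ?g p) v = frechet_derivative H (at p) v" .
  qed
  define Y where "Y = X - cross3 ?g p"
  have pY: "p \<bullet> Y = 0" using X unfolding Y_def tangent_space_def by (simp add: inner_diff_right dot_cross0)
  have Yv: "p \<bullet> cross3 Y v = 0" if "p \<bullet> v = 0" for v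
    using X X0 that unfolding Y_def tangent_space_def by (simp add: Cross3.left_diff_distrib inner_diff_right)
  have "p \<bullet> (cross3 p Y) = 0" by (simp add: dot_cross0)
  then have "p \<bullet> cross3 Y (cross3 p Y) = 0" by (rule Yv)
  moreover have "cross3 Y (cross3 p Y) = (Y \<bullet> Y) *\<^sub>R p - (Y \<bullet> p) *\<^sub>R Y" by (rule V1)
  ultimately have "Y \<bullet> Y = 0" using pp pY by (simp add: inner_diff_right inner_commute)
  then have "Y = 0" by simp
  then show "X = cross3 ?g p" unfolding Y_def by simp
qed

lemma LIN2: "((\<lambda>p. frechet_derivative H (at p) w) has_derivative
   (\<lambda>u. \<Sum>i\<in>UNIV. w$i * frechet_derivative (\<lambda>x. frechet_derivative H (at x) (axis i 1)) (at s) u)) (at s)"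
proof -
  have d: "((\<lambda>p. \<Sum>i\<in>UNIV. w$i * frechet_derivative H (at p) (axis i 1)) has_derivative
   (\<lambda>u. \<Sum>i\<in>UNIV. w$i * frechet_derivative (\<lambda>x. frechet_derivative H (at x) (axis i 1)) (at s) u)) (at s)"
    by (intro has_derivative_sum has_derivative_mult_right frechet_derivative_works[THEN iffD1] dE sU')
  show ?thesis
    by (rule has_derivative_transform_within_open[OF d oU sU']) (rule DH_expand[symmetric])
qed

lemma SYM: "(\<Sum>i\<in>UNIV. w$i * frechet_derivative (\<lambda>x. frechet_derivative H (at x) (axis i 1)) (at s) v)
   = (\<Sum>i\<in>UNIV. v$i * frechet_derivative (\<lambda>x. frechet_derivative H (at x) (axis i 1)) (at s) w)"
proof -
  have dw: "(\<lambda>p. frechet_derivative H (at p) w) differentiable at s" using LIN2 by (rule differentiableI)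
  have dv: "(\<lambda>p. frechet_derivative H (at p) v) differentiable at s" using LIN2 by (rule differentiableI)
  have sch: "frechet_derivative (\<lambda>p. frechet_derivative H (at p) w) (at s) v
       = frechet_derivative (\<lambda>p. frechet_derivative H (at p) v) (at s) w"
    by (rule schwarz[OF oU sU' dH dw dv])
  have e1: "frechet_derivative (\<lambda>p. frechet_derivative H (at p) w) (at s) =
    (\<lambda>u. \<Sum>i\<in>UNIV. w$i * frechet_derivative (\<lambda>x. frechet_derivative H (at x) (axis i 1)) (at s) u)"
    by (rule frechet_derivative_at[OF LIN2, symmetric])
  have e2: "frechet_derivative (\<lambda>p. frechet_derivative H (at p) v) (at s) =
    (\<lambda>u. \<Sum>i\<in>UNIV. v$i * frechet_derivative (\<lambda>x. frechet_derivative H (at x) (axis i 1)) (at s) u)"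
    by (rule frechet_derivative_at[OF LIN2, symmetric])
  show ?thesis using sch unfolding e1 e2 .
qed

lemma hess_sym: "hessv H s v \<bullet> w = hessv H s w \<bullet> v"
  unfolding hessv_def sum_axis_inner using SYM by simp

lemma COV:
  assumes sv: "s \<bullet> v = 0"
  shows "covariant_deriv (hamiltonian_vf H) s v =
     (cross3 (hessv H s v) s + cross3 (gradv H s) v) - (s \<bullet> (cross3 (hessv H s v) s + cross3 (gradv H s) v)) *\<^sub>R s"
proof -
  let ?E = "\<lambda>i. (\<lambda>x. frechet_derivative H (at x) (axis i 1))"
  have cd: "(sphere_chart s has_derivative Dc s 0) (at 0)" using chart_deriv[OF nz] by simp
  have Ed: "((\<lambda>x. ?E i (sphere_chart s x)) has_derivative (\<lambda>h. frechet_derivative (?E i) (at s) (Dc s 0 h))) (at 0)" for i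
  proof -
    have "(?E i has_derivative frechet_derivative (?E i) (at s)) (at (sphere_chart s 0))"
      using dE[OF sU'] frechet_derivative_works c0 by metis
    from diff_chain_at[OF cd this] show ?thesis by (simp add: o_def)
  qed
  have gd: "((\<lambda>x. gradv H (sphere_chart s x)) has_derivative
     (\<lambda>h. \<Sum>i\<in>UNIV. frechet_derivative (?E i) (at s) (Dc s 0 h) *\<^sub>R axis i 1)) (at 0)"
    unfolding gradv_def by (intro has_derivative_sum has_derivative_scaleR_left Ed)
  have bb: "bounded_bilinear cross3" using bilinear_cross bilinear_conv_bounded_bilinear by blast
  have kd: "((\<lambda>x. cross3 (gradv H (sphere_chart s x)) (sphere_chart s x)) has_derivative
     (\<lambda>h. cross3 (gradv H (sphere_chart s 0)) (Dc s 0 h) + cross3 (\<Sum>i\<in>UNIV. frechet_derivative (?E i) (at s) (Dc s 0 h) *\<^sub>R axis i 1) (sphere_chart s 0))) (at 0)"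
    using bounded_bilinear.FDERIV[OF bb gd cd] .
  have eq: "cross3 (gradv H (sphere_chart s x)) (sphere_chart s x) = (hamiltonian_vf H \<circ> sphere_chart s) x"
    if "x \<in> ball 0 1" for x
  proof -
    have "norm x < 1" using that by simp
    then have "sphere_chart s x \<in> sphere 0 1" using c_norm by simp
    then show ?thesis using HV by simp
  qed
  have "((hamiltonian_vf H \<circ> sphere_chart s) has_derivative
     (\<lambda>h. cross3 (gradv H (sphere_chart s 0)) (Dc s 0 h) + cross3 (\<Sum>i\<in>UNIV. frechet_derivative (?E i) (at s) (Dc s 0 h) *\<^sub>R axis i 1) (sphere_chart s 0))) (at 0)"
    by (rule has_derivative_transform_within_open[OF kd open_ball[of 0 1]]) (use eq in auto)
  then have "frechet_derivative (hamiltonian_vf H \<circ> sphere_chart s) (at 0) =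
     (\<lambda>h. cross3 (gradv H (sphere_chart s 0)) (Dc s 0 h) + cross3 (\<Sum>i\<in>UNIV. frechet_derivative (?E i) (at s) (Dc s 0 h) *\<^sub>R axis i 1) (sphere_chart s 0))"
    by (rule frechet_derivative_at[symmetric])
  then have "frechet_derivative (hamiltonian_vf H \<circ> sphere_chart s) (at 0) v
     = cross3 (gradv H s) v + cross3 (hessv H s v) s"
    using c0 Dc0[OF s1 sv] unfolding hessv_def by simp
  then show ?thesis unfolding covariant_deriv_def Let_def by (simp add: add.commute)
qed

end

lemma aff_deriv:
  "((\<lambda>x::real^3. d + a * x$1 + b * x$2 + c * x$3) has_derivative (\<lambda>u. a * u$1 + b * u$2 + c * u$3)) (at p)"
proof -
  have n: "((\<lambda>x::real^3. x$i) has_derivative (\<lambda>u. u$i)) (at p)" for i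
    by (rule bounded_linear.has_derivative[OF bounded_linear_vec_nth has_derivative_ident])
  have "((\<lambda>x::real^3. d + a * x$1 + b * x$2 + c * x$3) has_derivative (\<lambda>u. 0 + a * u$1 + b * u$2 + c * u$3)) (at p)"
    by (intro has_derivative_add has_derivative_mult_right n has_derivative_const)
  then show ?thesis by simp
qed

lemma aff_fd: "frechet_derivative (\<lambda>x::real^3. d + a * x$1 + b * x$2 + c * x$3) (at p) = (\<lambda>u. a * u$1 + b * u$2 + c * u$3)"
  by (rule frechet_derivative_at[OF aff_deriv, symmetric])

lemma aff_E: "(\<lambda>x. frechet_derivative (\<lambda>x::real^3. d + a * x$1 + b * x$2 + c * x$3) (at x) u) = (\<lambda>x. a * u$1 + b * u$2 + c * u$3)"
  by (simp add: aff_fd)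

lemma aff_hyps:
  shows "\<And>p. p \<in> UNIV \<Longrightarrow> (\<lambda>x::real^3. d + a * x$1 + b * x$2 + c * x$3) differentiable at p"
    and "\<And>p i. p \<in> UNIV \<Longrightarrow> (\<lambda>x. frechet_derivative (\<lambda>x::real^3. d + a * x$1 + b * x$2 + c * x$3) (at x) (axis i 1)) differentiable at p"
   apply (rule differentiableI, rule aff_deriv)
  unfolding aff_E by simp

lemma inner3: "(u::real^3) \<bullet> x = u$1 * x$1 + u$2 * x$2 + u$3 * x$3"
  by (simp add: inner_vec_def sum_3)

theorem lemma5:
  fixes H :: "real^3 \<Rightarrow> real" and U :: "(real^3) set" and s :: "real^3"
  assumes "smooth_on U H" and "sphere 0 1 \<subseteq> U" and "s \<in> sphere 0 1"
  shows "conformal_point (hamiltonian_vf H) s \<longleftrightarrow>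
         (\<exists>a b c d :: real. jet2_eq s H (\<lambda>x. d + a * x$1 + b * x$2 + c * x$3))"
proof -
  from assms(1) have oU: "open U" and sm: "\<And>vs. iter_dd vs H differentiable_on U"
    unfolding smooth_on_def by auto
  have dH: "H differentiable at p" if "p \<in> U" for p
    using sm[of "[]"] oU that by (simp add: differentiable_on_eq_differentiable_at)
  have dE: "(\<lambda>x. frechet_derivative H (at x) (axis i 1)) differentiable at p" if "p \<in> U" for p i
    using sm[of "[axis i 1]"] oU that by (simp add: differentiable_on_eq_differentiable_at)
  have s1: "norm s = 1" using assms(3) by simp
  have ss: "s \<bullet> s = 1" using s1 by (simp add: norm_eq_1)
  note hyps = oU assms(2) s1 dH dE
  define G where "G = gradv H s"
  define h where "h = hessv H s"
  have hs: "\<And>v w. h v \<bullet> w = h w \<bullet> v" unfolding h_def by (rule hess_sym[OF hyps])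
  have conf: "conformal_point (hamiltonian_vf H) s \<longleftrightarrow>
      (\<exists>k. \<forall>v w. s \<bullet> v = 0 \<longrightarrow> s \<bullet> w = 0 \<longrightarrow> h v \<bullet> w = k * (v \<bullet> w))"
  proof -
    have "conformal_point (hamiltonian_vf H) s \<longleftrightarrow> (\<exists>l m. \<forall>v. s \<bullet> v = 0 \<longrightarrow>
            (cross3 (h v) s + cross3 G v) - (s \<bullet> (cross3 (h v) s + cross3 G v)) *\<^sub>R s
              = l *\<^sub>R v + m *\<^sub>R cross3 s v)"
      unfolding conformal_point_def tangent_space_def G_def h_def using COV[OF hyps] by simp
    also have "\<dots> \<longleftrightarrow> (\<exists>k. \<forall>v w. s \<bullet> v = 0 \<longrightarrow> s \<bullet> w = 0 \<longrightarrow> h v \<bullet> w = k * (v \<bullet> w))"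
      by (rule alg_conf[OF ss hs])
    finally show ?thesis .
  qed
  have sU: "s \<in> U" by (rule sU'[OF hyps])
  have H1: "iter_dd [v] (H \<circ> sphere_chart s) 0 = G \<bullet> v" if "s \<bullet> v = 0" for v
    using J1[OF hyps that] DH_grad[OF hyps sU] unfolding G_def by simp
  have H2: "iter_dd [w, v] (H \<circ> sphere_chart s) 0 = h w \<bullet> v - (w \<bullet> v) * (G \<bullet> s)"
    if "s \<bullet> v = 0" "s \<bullet> w = 0" for v w
    using J2[OF hyps that] DH_grad[OF hyps sU, of s] unfolding G_def h_def hessv_def sum_axis_inner
    by simp
  have jet: "jet2_eq s H (\<lambda>x. d + a * x$1 + b * x$2 + c * x$3) \<longleftrightarrow>
      (H s = d + a * s$1 + b * s$2 + c * s$3 \<and> (\<forall>v. s \<bullet> v = 0 \<longrightarrow> G \<bullet> v = a * v$1 + b * v$2 + c * v$3)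
        \<and> (\<forall>v w. s \<bullet> v = 0 \<longrightarrow> s \<bullet> w = 0 \<longrightarrow>
             h w \<bullet> v - (w \<bullet> v) * (G \<bullet> s) = - ((w \<bullet> v) * (a * s$1 + b * s$2 + c * s$3))))" for a b c d
  proof -
    let ?A = "\<lambda>x::real^3. d + a * x$1 + b * x$2 + c * x$3"
    note ah = open_UNIV subset_UNIV s1 aff_hyps[where d=d and a=a and b=b and c=c]
    have A1: "iter_dd [v] (?A \<circ> sphere_chart s) 0 = a * v$1 + b * v$2 + c * v$3" if "s \<bullet> v = 0" for v
      using J1[OF ah that] aff_fd by simp
    have A2: "iter_dd [w, v] (?A \<circ> sphere_chart s) 0 = - ((w \<bullet> v) * (a * s$1 + b * s$2 + c * s$3))"
      if "s \<bullet> v = 0" "s \<bullet> w = 0" for v w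
      using J2[OF ah that] unfolding aff_E aff_fd by simp
    show ?thesis
      unfolding jet2_eq_def Let_def tangent_space_def
      using J0[OF hyps] J0[OF ah] H1 H2 A1 A2 by auto
  qed
  show ?thesis unfolding conf jet
  proof
    assume "\<exists>k. \<forall>v w. s \<bullet> v = 0 \<longrightarrow> s \<bullet> w = 0 \<longrightarrow> h v \<bullet> w = k * (v \<bullet> w)"
    then obtain k where k: "\<And>v w. s \<bullet> v = 0 \<Longrightarrow> s \<bullet> w = 0 \<Longrightarrow> h v \<bullet> w = k * (v \<bullet> w)" by blast
    define L where "L = G - k *\<^sub>R s"
    have Ls: "L \<bullet> s = G \<bullet> s - k" unfolding L_def using ss by (simp add: inner_diff_left)
    have Lv: "L \<bullet> v = G \<bullet> v" if "s \<bullet> v = 0" for v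
      unfolding L_def using that by (simp add: inner_diff_left)
    show "\<exists>a b c d. H s = d + a * s$1 + b * s$2 + c * s$3 \<and> (\<forall>v. s \<bullet> v = 0 \<longrightarrow> G \<bullet> v = a * v$1 + b * v$2 + c * v$3)
        \<and> (\<forall>v w. s \<bullet> v = 0 \<longrightarrow> s \<bullet> w = 0 \<longrightarrow>
             h w \<bullet> v - (w \<bullet> v) * (G \<bullet> s) = - ((w \<bullet> v) * (a * s$1 + b * s$2 + c * s$3)))"
    proof (intro exI conjI allI impI)
      show "H s = (H s - L \<bullet> s) + L$1 * s$1 + L$2 * s$2 + L$3 * s$3" by (simp add: inner3)
      fix v assume sv: "s \<bullet> v = 0"
      show "G \<bullet> v = L$1 * v$1 + L$2 * v$2 + L$3 * v$3" using Lv[OF sv] by (simp add: inner3)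
    next
      fix v w assume sv: "s \<bullet> v = 0" and sw: "s \<bullet> w = 0"
      have "h w \<bullet> v = k * (w \<bullet> v)" by (rule k[OF sw sv])
      then show "h w \<bullet> v - (w \<bullet> v) * (G \<bullet> s) = - ((w \<bullet> v) * (L$1 * s$1 + L$2 * s$2 + L$3 * s$3))"
      proof -
        have e: "L$1 * s$1 + L$2 * s$2 + L$3 * s$3 = G \<bullet> s - k" using Ls inner3[of L s] by simp
        show ?thesis unfolding e \<open>h w \<bullet> v = k * (w \<bullet> v)\<close> by (simp add: algebra_simps)
      qed
    qed
  next
    assume "\<exists>a b c d. H s = d + a * s$1 + b * s$2 + c * s$3 \<and> (\<forall>v. s \<bullet> v = 0 \<longrightarrow> G \<bullet> v = a * v$1 + b * v$2 + c * v$3)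
        \<and> (\<forall>v w. s \<bullet> v = 0 \<longrightarrow> s \<bullet> w = 0 \<longrightarrow>
             h w \<bullet> v - (w \<bullet> v) * (G \<bullet> s) = - ((w \<bullet> v) * (a * s$1 + b * s$2 + c * s$3)))"
    then obtain a b c d where
      abc: "\<And>v w. s \<bullet> v = 0 \<Longrightarrow> s \<bullet> w = 0 \<Longrightarrow>
             h w \<bullet> v - (w \<bullet> v) * (G \<bullet> s) = - ((w \<bullet> v) * (a * s$1 + b * s$2 + c * s$3))" by blast
    show "\<exists>k. \<forall>v w. s \<bullet> v = 0 \<longrightarrow> s \<bullet> w = 0 \<longrightarrow> h v \<bullet> w = k * (v \<bullet> w)"
    proof (intro exI allI impI)
      fix v w assume sv: "s \<bullet> v = 0" and sw: "s \<bullet> w = 0"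
      have "h v \<bullet> w = h w \<bullet> v" by (rule hs)
      then show "h v \<bullet> w = (G \<bullet> s - (a * s$1 + b * s$2 + c * s$3)) * (v \<bullet> w)"
        using abc[OF sv sw] by (simp add: inner_commute algebra_simps)
    qed
  qed
qed

end
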